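(* Let $n\geqslant 0$ and let $W_n$ act on $\mathcal{C}^n$ via its left action on $W_n/W_{n-1}$. Then: (1) for each $k$, $W_n$ acts transitively on the set of $k$-simplices of $\mathcal{C}^n$; (2) for any $k$-simplex $C$ and any permutation $\phi$ of the vertices of $C$, there is an element of $W_n$ that maps $C$ to itself and acts on its vertices as $\phi$; (3) every simplex of $\mathcal{C}^n$ is a face of an $n$-simplex.
   Context: Standing setup: $\Gamma_1$ is an arbitrary finite Coxeter diagram with a preferred vertex $s_1$ (edge $\{s,t\}$ iff $m_{st}\geqslant3$; unlabelled edge means $m_{st}=3$, no edge means $m_{st}=2$). For $n\geqslant 2$, $\Gamma_n$ is obtained from $\Gamma_{n-1}$ by adding one new vertex $s_n$ joined by an unlabelled edge to $s_{n-1}$ and to no other vertex. $\Gamma_0$ is $\Gamma_1$ with $s_1$ deleted; $\Gamma_{-1}$ is $\Gamma_1$ with $s_1$ and all its neighbours deleted. For $n\geqslant -1$, $S_n$ is the vertex set of $\Gamma_n$ and $W_n$ the Coxeter group; $W_m$ ($m\leqslant n$) is the standard parabolic subgroup of $W_n$ generated by $S_m$. Definition of $\mathcal{C}^n$ ($n\geqslant 0$): the abstract simplicial complex with vertex set $W_n/W_{n-1}$ whose $k$-simplices ($0\leqslant k\leqslant n$) are the sets $\{c(s_{n-k+1}\cdots s_n)W_{n-1},\ \ldots,\ cs_nW_{n-1},\ cW_{n-1}\}$ for $c\in W_n$; such $c$ is called a lift of the simplex. *)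

theory Defs
  imports Main "HOL-Library.Extended_Nat" "HOL-Combinatorics.Permutations"
begin

text \<open>A Coxeter matrix is a function M :: 'v => 'v => enat (the value infinity
means no relation). The relators are the words (s t)^(M s t) for s, t in S with
M s t finite; since M s s = 1 this includes s s.\<close>

definition cox_relators :: "'v set \<Rightarrow> ('v \<Rightarrow> 'v \<Rightarrow> enat) \<Rightarrow> 'v list set" where
  "cox_relators S M = {concat (replicate (the_enat (M s t)) [s, t]) | s t.
      s \<in> S \<and> t \<in> S \<and> M s t \<noteq> \<infinity>}"

text \<open>Elements of the
group are the equivalence classes of words; product is concatenation.\<close>

inductive_set cox_eq :: "'v set \<Rightarrow> ('v \<Rightarrow> 'v \<Rightarrow> enat) \<Rightarrow> ('v list \<times> 'v list) set"
  for S M where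
  refl: "w \<in> lists S \<Longrightarrow> (w, w) \<in> cox_eq S M"
| sym: "(u, v) \<in> cox_eq S M \<Longrightarrow> (v, u) \<in> cox_eq S M"
| trans: "(u, v) \<in> cox_eq S M \<Longrightarrow> (v, w) \<in> cox_eq S M \<Longrightarrow> (u, w) \<in> cox_eq S M"
| rel: "u \<in> lists S \<Longrightarrow> v \<in> lists S \<Longrightarrow> r \<in> cox_relators S M \<Longrightarrow>
        (u @ r @ v, u @ v) \<in> cox_eq S M"

text \<open>Vertices of Gamma_1 have type 'a; the new vertices s_k (k >= 2) are Inr k;
s_1 is Inl s1.\<close>

definition gen :: "'a \<Rightarrow> nat \<Rightarrow> 'a + nat" where
  "gen s1 k = (if k = 1 then Inl s1 else Inr k)"

fun cox_mat :: "'a \<Rightarrow> ('a \<Rightarrow> 'a \<Rightarrow> enat) \<Rightarrow> 'a + nat \<Rightarrow> 'a + nat \<Rightarrow> enat" where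
  "cox_mat s1 m1 (Inl a) (Inl b) = m1 a b"
| "cox_mat s1 m1 (Inr i) (Inr j) =
     (if i = j then 1 else if i = Suc j \<or> j = Suc i then 3 else 2)"
| "cox_mat s1 m1 (Inl a) (Inr j) = (if j = 2 \<and> a = s1 then 3 else 2)"
| "cox_mat s1 m1 (Inr j) (Inl a) = (if j = 2 \<and> a = s1 then 3 else 2)"

definition gens :: "'a set \<Rightarrow> 'a \<Rightarrow> ('a \<Rightarrow> 'a \<Rightarrow> enat) \<Rightarrow> int \<Rightarrow> ('a + nat) set" where
  "gens V1 s1 m1 n =
     (if n \<ge> 1 then Inl ` V1 \<union> Inr ` {2..nat n}
      else if n = 0 then Inl ` (V1 - {s1})
      else Inl ` {v \<in> V1. v \<noteq> s1 \<and> \<not> (m1 s1 v \<ge> 3)})"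

definition Weq :: "'a set \<Rightarrow> 'a \<Rightarrow> ('a \<Rightarrow> 'a \<Rightarrow> enat) \<Rightarrow> nat \<Rightarrow> (('a + nat) list \<times> ('a + nat) list) set" where
  "Weq V1 s1 m1 n = cox_eq (gens V1 s1 m1 (int n)) (cox_mat s1 m1)"

text \<open>The left coset c W_{n-1} in W_n, represented as the set of all words over S_n
representing an element of it.\<close>

definition coset :: "'a set \<Rightarrow> 'a \<Rightarrow> ('a \<Rightarrow> 'a \<Rightarrow> enat) \<Rightarrow> nat \<Rightarrow> ('a + nat) list \<Rightarrow> ('a + nat) list set" where
  "coset V1 s1 m1 n c = {w. \<exists>h \<in> lists (gens V1 s1 m1 (int n - 1)). (w, c @ h) \<in> Weq V1 s1 m1 n}"

text \<open>The k-simplex with lift c: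
  { c (s_{n-k+1} ... s_n) W_{n-1}, ..., c s_n W_{n-1}, c W_{n-1} }.\<close>

definition simplex_of :: "'a set \<Rightarrow> 'a \<Rightarrow> ('a \<Rightarrow> 'a \<Rightarrow> enat) \<Rightarrow> nat \<Rightarrow> nat \<Rightarrow> ('a + nat) list \<Rightarrow> ('a + nat) list set set" where
  "simplex_of V1 s1 m1 n k c =
     {coset V1 s1 m1 n (c @ map (gen s1) [n - j + 1 ..< n + 1]) | j. j \<le> k}"

definition simplices :: "'a set \<Rightarrow> 'a \<Rightarrow> ('a \<Rightarrow> 'a \<Rightarrow> enat) \<Rightarrow> nat \<Rightarrow> nat \<Rightarrow> ('a + nat) list set set set" where
  "simplices V1 s1 m1 n k =
     (if k \<le> n then {simplex_of V1 s1 m1 n k c | c. c \<in> lists (gens V1 s1 m1 (int n))} else {})"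

definition act :: "'a set \<Rightarrow> 'a \<Rightarrow> ('a \<Rightarrow> 'a \<Rightarrow> enat) \<Rightarrow> nat \<Rightarrow> ('a + nat) list \<Rightarrow> ('a + nat) list set \<Rightarrow> ('a + nat) list set" where
  "act V1 s1 m1 n g X = {w. \<exists>x \<in> X. (w, g @ x) \<in> Weq V1 s1 m1 n}"

end

theory Submission
  imports Defs
begin


lemma relators_lists: "r \<in> cox_relators S M \<Longrightarrow> r \<in> lists S"
  unfolding cox_relators_def by (auto split: if_splits)

lemma ce_lists: "(u,v) \<in> cox_eq S M \<Longrightarrow> u \<in> lists S \<and> v \<in> lists S"
  by (induction rule: cox_eq.induct) (auto dest: relators_lists)

lemma ce_left: "(u,v) \<in> cox_eq S M \<Longrightarrow> g \<in> lists S \<Longrightarrow> (g@u, g@v) \<in> cox_eq S M"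
proof (induction rule: cox_eq.induct)
  case (refl w) then show ?case by (intro cox_eq.refl) auto
next
  case (sym u v) then show ?case by (auto intro: cox_eq.sym)
next
  case (trans u v w) then show ?case by (auto intro: cox_eq.trans)
next
  case (rel u v r) then show ?case using cox_eq.rel[of "g@u" S v r M] by simp
qed

lemma ce_right: "(u,v) \<in> cox_eq S M \<Longrightarrow> g \<in> lists S \<Longrightarrow> (u@g, v@g) \<in> cox_eq S M"
proof (induction rule: cox_eq.induct)
  case (refl w) then show ?case by (intro cox_eq.refl) auto
next
  case (sym u v) then show ?case by (auto intro: cox_eq.sym)
next
  case (trans u v w) then show ?case by (auto intro: cox_eq.trans)
next
  case (rel u v r) then show ?case using cox_eq.rel[of u S "v@g" r M] by simp
qed

lemma ce_app: "(u,v) \<in> cox_eq S M \<Longrightarrow> (u',v') \<in> cox_eq S M \<Longrightarrow> (u@u', v@v') \<in> cox_eq S M"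
  by (meson ce_left ce_lists ce_right cox_eq.trans)

lemma rel_1: "a\<in>S \<Longrightarrow> M a a = 1 \<Longrightarrow> [a,a] \<in> cox_relators S M"
  unfolding cox_relators_def by (rule CollectI, rule exI[of _ a], rule exI[of _ a]) (simp add: one_enat_def)

lemma rel_2: "a\<in>S \<Longrightarrow> b\<in>S \<Longrightarrow> M a b = 2 \<Longrightarrow> [a,b,a,b] \<in> cox_relators S M"
  unfolding cox_relators_def by (rule CollectI, rule exI[of _ a], rule exI[of _ b]) (simp add: numeral_eq_enat numeral_2_eq_2)

lemma rel_3: "a\<in>S \<Longrightarrow> b\<in>S \<Longrightarrow> M a b = 3 \<Longrightarrow> [a,b,a,b,a,b] \<in> cox_relators S M"
  unfolding cox_relators_def by (rule CollectI, rule exI[of _ a], rule exI[of _ b]) (simp add: numeral_eq_enat numeral_3_eq_3)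

lemma ce_aa: "a\<in>S \<Longrightarrow> M a a = 1 \<Longrightarrow> u\<in>lists S \<Longrightarrow> v\<in>lists S \<Longrightarrow> (u@a#a#v, u@v) \<in> cox_eq S M"
  using cox_eq.rel[of u S v "[a,a]" M] rel_1[of a S M] by simp

lemma ce_inv: assumes "\<forall>a\<in>S. M a a = 1" shows "w \<in> lists S \<Longrightarrow> (rev w @ w, []) \<in> cox_eq S M"
proof (induction w)
  case Nil then show ?case by (simp add: cox_eq.refl)
next
  case (Cons a w)
  then have "(rev w @ a # a # w, rev w @ w) \<in> cox_eq S M" using assms by (intro ce_aa) auto
  with Cons show ?case by (auto intro: cox_eq.trans)
qed

lemma ce_inv2: assumes "\<forall>a\<in>S. M a a = 1" "w \<in> lists S" shows "(w @ rev w, []) \<in> cox_eq S M"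
  using ce_inv[of S M "rev w"] assms by (simp add: in_lists_conv_set)

lemma ce_comm: assumes "a\<in>S" "b\<in>S" "M a b = 2" "M a a = 1" "M b b = 1"
  shows "([a,b],[b,a]) \<in> cox_eq S M"
proof -
  have 1: "([b,a] @ [a,b,a,b] @ [], [b,a] @ []) \<in> cox_eq S M"
    using assms by (intro cox_eq.rel rel_2) auto
  have 2: "([b] @ a # a # [b,a,b], [b] @ [b,a,b]) \<in> cox_eq S M"
    using assms by (intro ce_aa) auto
  have 3: "([] @ b # b # [a,b], [] @ [a,b]) \<in> cox_eq S M"
    using assms by (intro ce_aa) auto
  from 1 2 3 show ?thesis by simp (meson cox_eq.sym cox_eq.trans)
qed

lemma ce_braid: assumes "a\<in>S" "b\<in>S" "M a b = 3" "M a a = 1" "M b b = 1"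
  shows "([a,b,a],[b,a,b]) \<in> cox_eq S M"
proof -
  have 1: "([] @ [a,b,a,b,a,b] @ [b,a,b], [] @ [b,a,b]) \<in> cox_eq S M"
    using assms by (intro cox_eq.rel rel_3) auto
  have 2: "([a,b,a,b,a] @ b # b # [a,b], [a,b,a,b,a] @ [a,b]) \<in> cox_eq S M"
    using assms by (intro ce_aa) auto
  have 3: "([a,b,a,b] @ a # a # [b], [a,b,a,b] @ [b]) \<in> cox_eq S M"
    using assms by (intro ce_aa) auto
  have 4: "([a,b,a] @ b # b # [], [a,b,a] @ []) \<in> cox_eq S M"
    using assms by (intro ce_aa) auto
  from 1 2 3 4 show ?thesis by simp (meson cox_eq.sym cox_eq.trans)
qed

lemma ce_comm_list: assumes "\<forall>x\<in>S. M x x = 1" "a \<in> S"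
  shows "xs \<in> lists S \<Longrightarrow> \<forall>x\<in>set xs. M a x = 2 \<Longrightarrow> (a # xs, xs @ [a]) \<in> cox_eq S M"
proof (induction xs)
  case Nil then show ?case using assms by (auto intro: cox_eq.refl)
next
  case (Cons x xs)
  have "([a,x] @ xs, [x,a] @ xs) \<in> cox_eq S M"
    using Cons assms by (intro ce_right ce_comm) auto
  moreover have "([x] @ (a # xs), [x] @ (xs @ [a])) \<in> cox_eq S M"
    using Cons by (intro ce_left) auto
  ultimately show ?case by simp (meson cox_eq.trans)
qed



lemma upt_split3: "a \<le> b \<Longrightarrow> b \<le> c \<Longrightarrow> [a..<c] = [a..<b] @ [b..<c]"
  by (metis le_add_diff_inverse upt_add_eq_append)

context
  fixes V1 :: "'a set" and s1 :: 'a and m1 :: "'a \<Rightarrow> 'a \<Rightarrow> enat" and n :: nat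
  assumes s1V: "s1 \<in> V1" and diag: "\<forall>a\<in>V1. m1 a a = 1"
begin

abbreviation "SS \<equiv> gens V1 s1 m1 (int n)"
abbreviation "HH \<equiv> gens V1 s1 m1 (int n - 1)"
abbreviation "MM \<equiv> cox_mat s1 m1"
abbreviation "G \<equiv> gen s1"
abbreviation "EQ \<equiv> Weq V1 s1 m1 n"

lemma EQ_def: "EQ = cox_eq SS MM" by (simp add: Weq_def)

lemma invS: "\<forall>x\<in>SS. MM x x = 1"
  using diag unfolding gens_def by (auto split: if_splits)

lemma H_sub: "HH \<subseteq> SS"
  unfolding gens_def by auto

lemma G_S: "1 \<le> p \<Longrightarrow> p \<le> n \<Longrightarrow> G p \<in> SS"
  using s1V unfolding gens_def gen_def by auto

lemma G_H: "1 \<le> p \<Longrightarrow> p < n \<Longrightarrow> G p \<in> HH"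
  using s1V unfolding gens_def gen_def by auto

lemma M2: "1 \<le> p \<Longrightarrow> p + 2 \<le> q \<Longrightarrow> MM (G p) (G q) = 2 \<and> MM (G q) (G p) = 2"
  unfolding gen_def by auto

lemma M3: "1 \<le> p \<Longrightarrow> MM (G p) (G (Suc p)) = 3"
  unfolding gen_def by auto

definition ww :: "nat \<Rightarrow> ('a + nat) list" where
  "ww l = map G [n - l + 1..<n+1]"

lemma ww_S: "l \<le> n \<Longrightarrow> ww l \<in> lists SS"
  unfolding ww_def using G_S by auto

lemma EQ_lists: "(u,v) \<in> EQ \<Longrightarrow> u \<in> lists SS \<and> v \<in> lists SS"
  unfolding EQ_def by (rule ce_lists)

lemma coset_eq:
  assumes "(c, d@h) \<in> EQ" "h \<in> lists HH"
  shows "coset V1 s1 m1 n c = coset V1 s1 m1 n d"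
proof -
  have dS: "d \<in> lists SS" and cS: "c \<in> lists SS" and hS: "h \<in> lists SS"
    using EQ_lists[OF assms(1)] by auto
  show ?thesis
  proof (rule set_eqI, rule iffI)
    fix x assume "x \<in> coset V1 s1 m1 n c"
    then obtain h' where h': "h' \<in> lists HH" "(x, c@h') \<in> EQ" unfolding coset_def by auto
    have "(c@h', d@h@h') \<in> EQ" using ce_right[OF assms(1)[unfolded EQ_def], of h'] h' H_sub
      by (auto simp: EQ_def)
    then have "(x, d@(h@h')) \<in> EQ" using h' by (auto simp: EQ_def intro: cox_eq.trans)
    then show "x \<in> coset V1 s1 m1 n d" unfolding coset_def using h' assms(2) using h'(1) assms(2) by (intro CollectI bexI[of _ "h@h'"]) simp_all
  next
    fix x assume "x \<in> coset V1 s1 m1 n d"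
    then obtain h' where h': "h' \<in> lists HH" "(x, d@h') \<in> EQ" unfolding coset_def by auto
    have h'S: "h' \<in> lists SS" using h' H_sub by auto
    have A: "(d @ (h @ rev h) @ h', d @ [] @ h') \<in> cox_eq SS MM"
      using invS hS dS h'S by (intro ce_left ce_right ce_inv2) auto
    have A': "(d @ h', (d @ h) @ rev h @ h') \<in> cox_eq SS MM"
      using cox_eq.sym[OF A] by simp
    have B: "((d @ h) @ rev h @ h', c @ rev h @ h') \<in> cox_eq SS MM"
    proof -
      have "rev h @ h' \<in> lists SS" using hS h'S by (auto simp: in_lists_conv_set)
      from ce_right[OF cox_eq.sym[OF assms(1)[unfolded EQ_def]] this] show ?thesis by simp
    qed
    have "(x, c @ (rev h @ h')) \<in> cox_eq SS MM"
      using cox_eq.trans[OF cox_eq.trans[OF h'(2)[unfolded EQ_def] A'] B] .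
    then have "(x, c @ (rev h @ h')) \<in> EQ" unfolding EQ_def .
    then show "x \<in> coset V1 s1 m1 n c" unfolding coset_def using h'(1) assms(2) by (intro CollectI bexI[of _ "rev h @ h'"]) (auto simp: in_lists_conv_set)
  qed
qed

lemma coset_eq0: "(c, d) \<in> EQ \<Longrightarrow> coset V1 s1 m1 n c = coset V1 s1 m1 n d"
  using coset_eq[of c d "[]"] by simp

lemma act_coset:
  assumes "g \<in> lists SS" "c \<in> lists SS"
  shows "act V1 s1 m1 n g (coset V1 s1 m1 n c) = coset V1 s1 m1 n (g@c)"
proof (rule set_eqI, rule iffI)
  fix w assume "w \<in> act V1 s1 m1 n g (coset V1 s1 m1 n c)"
  then obtain x h where x: "(w, g@x) \<in> EQ" "h \<in> lists HH" "(x, c@h) \<in> EQ"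
    unfolding act_def coset_def by auto
  have "(g@x, g@c@h) \<in> EQ" using x assms unfolding EQ_def by (intro ce_left) auto
  then have "(w, (g@c)@h) \<in> EQ" using x unfolding EQ_def by (auto intro: cox_eq.trans)
  then show "w \<in> coset V1 s1 m1 n (g@c)" unfolding coset_def using x by auto
next
  fix w assume "w \<in> coset V1 s1 m1 n (g@c)"
  then obtain h where h: "h \<in> lists HH" "(w, g@c@h) \<in> EQ" unfolding coset_def by auto
  have "c@h \<in> coset V1 s1 m1 n c" unfolding coset_def EQ_def using h assms H_sub
    by (auto intro!: bexI[of _ h] cox_eq.refl)
  then show "w \<in> act V1 s1 m1 n g (coset V1 s1 m1 n c)" unfolding act_def using h by auto
qed

lemma key:
  assumes "i < k" "k \<le> n" "l \<le> k"
  shows "\<exists>h\<in>lists HH. (G (n-i) # ww l, ww (transpose i (Suc i) l) @ h) \<in> EQ"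
proof -
  define m where "m = n - i"
  have m1: "1 \<le> m" "m \<le> n" using assms unfolding m_def by auto
  have wS: "ww l \<in> lists SS" using assms ww_S by auto
  consider "l = i" | "l = Suc i" | "l < i" | "Suc i < l" by linarith
  then show ?thesis
  proof cases
    case 1
    have "ww (Suc i) = G m # ww i"
    proof -
      have a: "n - Suc i + 1 = m" "n - i + 1 = Suc m" using assms unfolding m_def by auto
      have "[m..<n+1] = m # [Suc m..<n+1]" using m1 by (simp add: upt_conv_Cons)
      then show ?thesis unfolding ww_def a by simp
    qed
    then show ?thesis using 1 ww_S[of "Suc i"] assms
      by (auto simp: m_def EQ_def intro!: bexI[of _ "[]"] cox_eq.refl)
  next
    case 2
    have "ww (Suc i) = G m # ww i"
    proof -
      have a: "n - Suc i + 1 = m" "n - i + 1 = Suc m" using assms unfolding m_def by auto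
      have "[m..<n+1] = m # [Suc m..<n+1]" using m1 by (simp add: upt_conv_Cons)
      then show ?thesis unfolding ww_def a by simp
    qed
    moreover have "([] @ G m # G m # ww i, [] @ ww i) \<in> EQ"
      unfolding EQ_def using invS G_S m1 ww_S[of i] assms by (intro ce_aa) auto
    ultimately show ?thesis using 2 by (auto simp: m_def intro!: bexI[of _ "[]"])
  next
    case 3
    have "(G m # ww l, ww l @ [G m]) \<in> EQ"
      unfolding EQ_def using invS G_S m1 wS
    proof (intro ce_comm_list)
      show "\<forall>x\<in>set (ww l). MM (G m) x = 2"
        unfolding ww_def m_def using M2 3 m1(1) unfolding m_def by auto
    qed auto
    moreover have "G m \<in> HH" using G_H m1 3 unfolding m_def by auto
    ultimately show ?thesis using 3 by (auto simp: m_def intro!: bexI[of _ "[G m]"])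
  next
    case 4
    define A where "A = map G [n - l + 1..<m-1]"
    define B where "B = map G [m+1..<n+1]"
    have split: "ww l = A @ [G (m-1), G m] @ B"
    proof -
      have "[n - l + 1..<n+1] = [n - l + 1..<m-1] @ [m-1..<n+1]"
        using 4 assms unfolding m_def by (intro upt_split3) auto
      moreover have "[m-1..<n+1] = (m-1) # m # [m+1..<n+1]"
      proof -
        have "[m..<n+1] = m # [Suc m..<n+1]" using m1 by (simp add: upt_conv_Cons)
        moreover have "[m-1..<n+1] = (m-1) # [Suc (m-1)..<n+1]" using m1 by (simp add: upt_conv_Cons)
        moreover have "Suc (m-1) = m" using 4 assms unfolding m_def by auto
        ultimately show ?thesis by simp
      qed
      ultimately show ?thesis unfolding ww_def A_def B_def
        using 4 assms m1 unfolding m_def by (simp add: Suc_diff_Suc)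
    qed
    have m2: "2 \<le> m" using 4 assms unfolding m_def by auto
    have AS: "A \<in> lists SS" "B \<in> lists SS" unfolding A_def B_def using G_S m1 assms by auto
    have gS: "G m \<in> SS" "G (m-1) \<in> SS" using G_S m1 m2 by auto
    have e1: "(G m # A @ ([G (m-1), G m] @ B), A @ [G m] @ ([G (m-1), G m] @ B)) \<in> EQ"
    proof -
      have "(G m # A, A @ [G m]) \<in> EQ"
        unfolding EQ_def using invS gS AS
      proof (intro ce_comm_list)
        show "\<forall>x\<in>set A. MM (G m) x = 2"
          unfolding A_def using M2 m2 4 assms by auto
      qed auto
      then have "((G m # A) @ ([G (m-1), G m] @ B), (A @ [G m]) @ ([G (m-1), G m] @ B)) \<in> EQ"
        unfolding EQ_def using AS gS by (intro ce_right) auto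
      then show ?thesis by simp
    qed
    have br: "([G (m-1), G m, G (m-1)], [G m, G (m-1), G m]) \<in> EQ"
      unfolding EQ_def using invS gS M3[of "m-1"] m2 by (intro ce_braid) auto
    have e2: "(A @ [G m, G (m-1), G m] @ B, A @ [G (m-1), G m, G (m-1)] @ B) \<in> EQ"
    proof -
      have "([G m, G (m-1), G m], [G (m-1), G m, G (m-1)]) \<in> cox_eq SS MM"
        using br cox_eq.sym unfolding EQ_def by blast
      then have "([G m, G (m-1), G m] @ B, [G (m-1), G m, G (m-1)] @ B) \<in> cox_eq SS MM"
        by (rule ce_right) (rule AS(2))
      then have "(A @ [G m, G (m-1), G m] @ B, A @ [G (m-1), G m, G (m-1)] @ B) \<in> cox_eq SS MM"
        by (rule ce_left) (rule AS(1))
      then show ?thesis unfolding EQ_def .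
    qed
    have e3: "(A @ [G (m-1), G m] @ (G (m-1) # B), A @ [G (m-1), G m] @ (B @ [G (m-1)])) \<in> EQ"
    proof -
      have "(G (m-1) # B, B @ [G (m-1)]) \<in> cox_eq SS MM"
        using invS gS AS
      proof (intro ce_comm_list)
        show "\<forall>x\<in>set B. MM (G (m-1)) x = 2"
          unfolding B_def using M2[of "m-1"] m2 by auto
      qed auto
      then have "([G (m-1), G m] @ (G (m-1) # B), [G (m-1), G m] @ (B @ [G (m-1)])) \<in> cox_eq SS MM"
        by (rule ce_left) (use gS in auto)
      then have "(A @ [G (m-1), G m] @ (G (m-1) # B), A @ [G (m-1), G m] @ (B @ [G (m-1)])) \<in> cox_eq SS MM"
        by (rule ce_left) (rule AS(1))
      then show ?thesis unfolding EQ_def .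
    qed
    have l1: "G m # A @ ([G (m-1), G m] @ B) = G m # ww l" using split by simp
    have l2: "A @ [G m] @ ([G (m-1), G m] @ B) = A @ [G m, G (m-1), G m] @ B" by simp
    have l3: "A @ [G (m-1), G m, G (m-1)] @ B = A @ [G (m-1), G m] @ (G (m-1) # B)" by simp
    have l4: "A @ [G (m-1), G m] @ (B @ [G (m-1)]) = ww l @ [G (m-1)]" using split by simp
    have "(G m # ww l, ww l @ [G (m-1)]) \<in> EQ"
      using e1 e2 e3 unfolding l1 l2 l3 l4 EQ_def by (blast intro: cox_eq.trans)
    moreover have "G (m-1) \<in> HH" using G_H m1 m2 by auto
    ultimately show ?thesis using 4 by (auto simp: m_def intro!: bexI[of _ "[G (m-1)]"])
  qed
qed


definition ff :: "('a + nat) list \<Rightarrow> nat \<Rightarrow> ('a + nat) list set" where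
  "ff c l = coset V1 s1 m1 n (c @ ww l)"

lemma act_comp:
  assumes "g \<in> lists SS" "g' \<in> lists SS" "x \<in> lists SS"
  shows "act V1 s1 m1 n (g@g') (coset V1 s1 m1 n x) = act V1 s1 m1 n g (act V1 s1 m1 n g' (coset V1 s1 m1 n x))"
  using assms by (simp add: act_coset)

lemma ff_nil: "c \<in> lists SS \<Longrightarrow> l \<le> n \<Longrightarrow> act V1 s1 m1 n [] (ff c l) = ff c l"
  unfolding ff_def using ww_S by (simp add: act_coset)

lemma act_ff: "c \<in> lists SS \<Longrightarrow> g \<in> lists SS \<Longrightarrow> l \<le> n \<Longrightarrow>
   act V1 s1 m1 n g (ff c l) = coset V1 s1 m1 n (g @ c @ ww l)"
  unfolding ff_def using ww_S by (simp add: act_coset)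

lemma move:
  assumes "c \<in> lists SS" "d \<in> lists SS" "l \<le> n"
  shows "act V1 s1 m1 n (d @ rev c) (ff c l) = ff d l"
proof -
  have "((rev c @ c) @ ww l, [] @ ww l) \<in> cox_eq SS MM"
    using assms invS ww_S by (intro ce_right ce_inv) auto
  then have "(d @ (rev c @ c) @ ww l, d @ [] @ ww l) \<in> cox_eq SS MM"
    using assms by (intro ce_left) auto
  then have "coset V1 s1 m1 n ((d @ rev c) @ c @ ww l) = ff d l"
    unfolding ff_def by (intro coset_eq0) (simp add: EQ_def)
  moreover have "d @ rev c \<in> lists SS" using assms by (auto simp: in_lists_conv_set)
  ultimately show ?thesis using assms by (simp add: act_ff)
qed

definition realz :: "('a + nat) list \<Rightarrow> nat \<Rightarrow> (nat \<Rightarrow> nat) \<Rightarrow> bool" where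
  "realz c k \<sigma> \<longleftrightarrow> (\<exists>g\<in>lists SS. \<forall>l\<le>k. act V1 s1 m1 n g (ff c l) = ff c (\<sigma> l))"

lemma adj:
  assumes "c \<in> lists SS" "i < k" "k \<le> n"
  shows "realz c k (transpose i (Suc i))"
proof -
  define m where "m = n - i"
  have gm: "G m \<in> SS" using G_S assms unfolding m_def by auto
  define g where "g = c @ [G m] @ rev c"
  have gS: "g \<in> lists SS" using assms gm unfolding g_def by (auto simp: in_lists_conv_set)
  have "\<forall>l\<le>k. act V1 s1 m1 n g (ff c l) = ff c (transpose i (Suc i) l)"
  proof (intro allI impI)
    fix l assume l: "l \<le> k"
    have wl: "ww l \<in> lists SS" using ww_S l assms by auto
    have "((rev c @ c) @ ww l, [] @ ww l) \<in> cox_eq SS MM"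
      using assms invS wl by (intro ce_right ce_inv) auto
    then have "((c @ [G m]) @ (rev c @ c) @ ww l, (c @ [G m]) @ [] @ ww l) \<in> cox_eq SS MM"
      using assms gm by (intro ce_left) auto
    then have e1: "coset V1 s1 m1 n (g @ c @ ww l) = coset V1 s1 m1 n (c @ (G m # ww l))"
      unfolding g_def by (intro coset_eq0) (simp add: EQ_def)
    obtain h where h: "h \<in> lists HH" "(G m # ww l, ww (transpose i (Suc i) l) @ h) \<in> EQ"
      using key[OF assms(2,3) l] unfolding m_def by blast
    have "(c @ (G m # ww l), (c @ ww (transpose i (Suc i) l)) @ h) \<in> EQ"
      using h(2) assms(1) unfolding EQ_def by (simp add: ce_left)
    then have "coset V1 s1 m1 n (c @ (G m # ww l)) = ff c (transpose i (Suc i) l)"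
      unfolding ff_def using h(1) by (rule coset_eq)
    with e1 show "act V1 s1 m1 n g (ff c l) = ff c (transpose i (Suc i) l)"
      using act_ff[OF assms(1) gS] l assms by simp
  qed
  then show ?thesis unfolding realz_def using gS by blast
qed

lemma realz_comp:
  assumes "c \<in> lists SS" "k \<le> n" "realz c k \<sigma>" "realz c k \<tau>" "\<forall>l\<le>k. \<tau> l \<le> k"
  shows "realz c k (\<sigma> \<circ> \<tau>)"
proof -
  obtain g1 where g1: "g1 \<in> lists SS" "\<forall>l\<le>k. act V1 s1 m1 n g1 (ff c l) = ff c (\<sigma> l)"
    using assms(3) unfolding realz_def by blast
  obtain g2 where g2: "g2 \<in> lists SS" "\<forall>l\<le>k. act V1 s1 m1 n g2 (ff c l) = ff c (\<tau> l)"
    using assms(4) unfolding realz_def by blast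
  have "\<forall>l\<le>k. act V1 s1 m1 n (g1@g2) (ff c l) = ff c ((\<sigma> \<circ> \<tau>) l)"
  proof (intro allI impI)
    fix l assume l: "l \<le> k"
    have "act V1 s1 m1 n (g1@g2) (ff c l) = act V1 s1 m1 n g1 (act V1 s1 m1 n g2 (ff c l))"
      unfolding ff_def using act_comp g1 g2 assms ww_S l by auto
    also have "\<dots> = ff c ((\<sigma> \<circ> \<tau>) l)" using g1 g2 l assms(5) by simp
    finally show "act V1 s1 m1 n (g1@g2) (ff c l) = ff c ((\<sigma> \<circ> \<tau>) l)" .
  qed
  moreover have "g1@g2 \<in> lists SS" using g1 g2 by simp
  ultimately show ?thesis unfolding realz_def by blast
qed

lemma transpose_le: "i \<le> k \<Longrightarrow> j \<le> k \<Longrightarrow> l \<le> k \<Longrightarrow> transpose i j l \<le> k"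
  by (simp add: transpose_def)

lemma realz_transp_aux:
  assumes "c \<in> lists SS" "k \<le> n"
  shows "i + Suc d \<le> k \<Longrightarrow> realz c k (transpose i (i + Suc d))"
proof (induction d arbitrary: i)
  case 0 then show ?case using adj[OF assms(1) _ assms(2), of i] by simp
next
  case (Suc d)
  have IH: "realz c k (transpose (Suc i) (Suc i + Suc d))" using Suc.IH[of "Suc i"] Suc.prems by simp
  have A: "realz c k (transpose i (Suc i))" using adj[OF assms(1) _ assms(2), of i] Suc by simp
  have "realz c k (transpose (Suc i) (Suc i + Suc d) \<circ> transpose i (Suc i))"
  proof (rule realz_comp[OF assms IH A])
    show "\<forall>l\<le>k. transpose i (Suc i) l \<le> k" using Suc.prems by (auto intro: transpose_le)
  qed
  then have "realz c k (transpose i (Suc i) \<circ> (transpose (Suc i) (Suc i + Suc d) \<circ> transpose i (Suc i)))"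
  proof (rule realz_comp[OF assms A])
    show "\<forall>l\<le>k. (transpose (Suc i) (Suc i + Suc d) \<circ> transpose i (Suc i)) l \<le> k"
      using Suc.prems by (auto intro!: transpose_le)
  qed
  moreover have "transpose i (Suc i) \<circ> (transpose (Suc i) (Suc i + Suc d) \<circ> transpose i (Suc i))
       = transpose i (i + Suc (Suc d))"
    using transpose_comp_triple[of i "i + Suc (Suc d)" "Suc i"] by (simp add: comp_assoc)
  ultimately show ?case by simp
qed

lemma realz_transp:
  assumes "c \<in> lists SS" "k \<le> n" "i \<le> k" "j \<le> k"
  shows "realz c k (transpose i j)"
proof -
  consider "i = j" | "i < j" | "j < i" by linarith
  then show ?thesis
  proof cases
    case 1
    have "\<forall>l\<le>k. act V1 s1 m1 n [] (ff c l) = ff c (transpose i j l)"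
      using 1 ff_nil[OF assms(1)] assms(2) by simp
    then show ?thesis unfolding realz_def by blast
  next
    case 2
    obtain d where "j = i + Suc d" using less_imp_Suc_add[OF 2] by (metis add_Suc_right)
    then show ?thesis using realz_transp_aux[OF assms(1,2)] assms by simp
  next
    case 3
    obtain d where "i = j + Suc d" using less_imp_Suc_add[OF 3] by (metis add_Suc_right)
    then show ?thesis using realz_transp_aux[OF assms(1,2), of j d] assms by (simp add: transpose_commute)
  qed
qed


lemma simplex_ff: "simplex_of V1 s1 m1 n k c = ff c ` {..k}"
proof -
  have "\<And>j. coset V1 s1 m1 n (c @ map (gen s1) [n - j + 1 ..< n + 1]) = ff c j"
    by (simp add: ww_def ff_def)
  then show ?thesis unfolding simplex_of_def by auto
qed

lemma simplicesE:
  assumes "C \<in> simplices V1 s1 m1 n k"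
  obtains c where "k \<le> n" "c \<in> lists SS" "C = ff c ` {..k}"
  using assms unfolding simplices_def simplex_ff by (auto split: if_splits)

lemma part1:
  assumes "C \<in> simplices V1 s1 m1 n k" "D \<in> simplices V1 s1 m1 n k"
  shows "\<exists>g \<in> lists SS. act V1 s1 m1 n g ` C = D"
proof -
  obtain c where c: "k \<le> n" "c \<in> lists SS" "C = ff c ` {..k}" using assms(1) by (rule simplicesE)
  obtain d where d: "d \<in> lists SS" "D = ff d ` {..k}" using assms(2) by (rule simplicesE)
  have "act V1 s1 m1 n (d @ rev c) ` C = D"
    unfolding c(3) d(2) image_image using move c d by (intro image_cong) auto
  moreover have "d @ rev c \<in> lists SS" using c d by (auto simp: in_lists_conv_set)
  ultimately show ?thesis by blast
qed

lemma part3: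
  assumes "C \<in> simplices V1 s1 m1 n k"
  shows "\<exists>D \<in> simplices V1 s1 m1 n n. C \<subseteq> D"
proof -
  obtain c where c: "k \<le> n" "c \<in> lists SS" "C = ff c ` {..k}" using assms by (rule simplicesE)
  have "ff c ` {..n} \<in> simplices V1 s1 m1 n n"
    unfolding simplices_def simplex_ff using c by auto
  moreover have "C \<subseteq> ff c ` {..n}" using c by auto
  ultimately show ?thesis by blast
qed

lemma part2:
  assumes "C \<in> simplices V1 s1 m1 n k" "\<phi> permutes C"
  shows "\<exists>g \<in> lists SS. \<forall>v \<in> C. act V1 s1 m1 n g v = \<phi> v"
proof -
  obtain c where c: "k \<le> n" "c \<in> lists SS" "C = ff c ` {..k}" using assms(1) by (rule simplicesE)
  show ?thesis
  proof (cases "inj_on (ff c) {..k}")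
    case True
    have "finite C" using c by auto
    from assms(2) this show ?thesis
    proof (induction \<phi> rule: permutes_induct)
      case id
      have "\<forall>v\<in>C. act V1 s1 m1 n [] v = id v" using c ff_nil by auto
      then show ?case by blast
    next
      case (swap a b p)
      obtain i where i: "i \<le> k" "a = ff c i" using swap c by auto
      obtain j where j: "j \<le> k" "b = ff c j" using swap c by auto
      obtain gt where gt: "gt \<in> lists SS" "\<forall>l\<le>k. act V1 s1 m1 n gt (ff c l) = ff c (transpose i j l)"
        using realz_transp[OF c(2) c(1) i(1) j(1)] unfolding realz_def by blast
      obtain gp where gp: "gp \<in> lists SS" "\<forall>v\<in>C. act V1 s1 m1 n gp v = p v" using swap by blast
      have "\<forall>v\<in>C. act V1 s1 m1 n (gt @ gp) v = (transpose a b \<circ> p) v"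
      proof
        fix v assume v: "v \<in> C"
        then obtain l0 where l0: "l0 \<le> k" "v = ff c l0" using c by auto
        have "p v \<in> C" using swap(4) v by (simp add: permutes_in_image)
        then obtain l where l: "l \<le> k" "p v = ff c l" using c by auto
        have "act V1 s1 m1 n (gt @ gp) v = act V1 s1 m1 n gt (act V1 s1 m1 n gp v)"
          unfolding l0 ff_def using act_comp gt gp c ww_S l0 by auto
        also have "\<dots> = ff c (transpose i j l)" using gp v l gt by simp
        also have "\<dots> = transpose a b (ff c l)"
          using True i j l unfolding transpose_def by (auto simp: inj_on_eq_iff)
        finally show "act V1 s1 m1 n (gt @ gp) v = (transpose a b \<circ> p) v" using l by simp
      qed
      moreover have "gt @ gp \<in> lists SS" using gt gp by simp
      ultimately show ?case by blast
    qed
  next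
    case False
    then obtain i j where ij: "i \<le> k" "j \<le> k" "i \<noteq> j" "ff c i = ff c j"
      unfolding inj_on_def by auto
    have all: "ff c b = ff c i" if b: "b \<le> k" for b
    proof (cases "b = i \<or> b = j")
      case True then show ?thesis using ij by auto
    next
      case False
      obtain gt where gt: "gt \<in> lists SS" "\<forall>l\<le>k. act V1 s1 m1 n gt (ff c l) = ff c (transpose j b l)"
        using realz_transp[OF c(2) c(1) ij(2) b] unfolding realz_def by blast
      have "act V1 s1 m1 n gt (ff c j) = ff c b" using gt(2) ij(2) by simp
      then have "ff c b = act V1 s1 m1 n gt (ff c j)" by simp
      also have "\<dots> = act V1 s1 m1 n gt (ff c i)" using ij(4) by simp
      also have "\<dots> = ff c i" using gt(2) ij(1,3) False by simp
      finally show ?thesis .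
    qed
    have "ff c ` {..k} = (\<lambda>_. ff c i) ` {..k}"
      by (rule image_cong) (auto intro!: all)
    also have "\<dots> = {ff c i}" by auto
    finally have C1: "C = {ff c i}" using c(3) by simp
    have "\<phi> (ff c i) \<in> C" using assms(2) C1 by (simp add: permutes_in_image)
    then have "\<forall>v\<in>C. act V1 s1 m1 n [] v = \<phi> v" using C1 c ff_nil ij by auto
    then show ?thesis by blast
  qed
qed

end

theorem lemma6p1:
  fixes V1 :: "'a set" and s1 :: 'a and m1 :: "'a \<Rightarrow> 'a \<Rightarrow> enat" and n :: nat
  assumes "finite V1" and "s1 \<in> V1"
    and "\<forall>a\<in>V1. m1 a a = 1"
    and "\<forall>a\<in>V1. \<forall>b\<in>V1. m1 a b = m1 b a"
    and "\<forall>a\<in>V1. \<forall>b\<in>V1. a \<noteq> b \<longrightarrow> m1 a b \<ge> 2"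
  shows "(\<forall>k. \<forall>C \<in> simplices V1 s1 m1 n k. \<forall>D \<in> simplices V1 s1 m1 n k.
            \<exists>g \<in> lists (gens V1 s1 m1 (int n)). act V1 s1 m1 n g ` C = D)
       \<and> (\<forall>k. \<forall>C \<in> simplices V1 s1 m1 n k. \<forall>\<phi>. \<phi> permutes C \<longrightarrow>
            (\<exists>g \<in> lists (gens V1 s1 m1 (int n)). \<forall>v \<in> C. act V1 s1 m1 n g v = \<phi> v))
       \<and> (\<forall>k. \<forall>C \<in> simplices V1 s1 m1 n k. \<exists>D \<in> simplices V1 s1 m1 n n. C \<subseteq> D)"
  proof (intro conjI allI ballI impI)
  fix k C D assume C: "C \<in> simplices V1 s1 m1 n k" and D: "D \<in> simplices V1 s1 m1 n k"
  show "\<exists>g \<in> lists (gens V1 s1 m1 (int n)). act V1 s1 m1 n g ` C = D"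
    using assms(2) assms(3) C D by (rule part1)
next
  fix k C \<phi> assume C: "C \<in> simplices V1 s1 m1 n k" and p: "\<phi> permutes C"
  show "\<exists>g \<in> lists (gens V1 s1 m1 (int n)). \<forall>v \<in> C. act V1 s1 m1 n g v = \<phi> v"
    using assms(2) assms(3) C p by (rule part2)
next
  fix k C assume C: "C \<in> simplices V1 s1 m1 n k"
  show "\<exists>D \<in> simplices V1 s1 m1 n n. C \<subseteq> D"
    using assms(2) assms(3) C by (rule part3)
qed

end
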